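(* Let $0<p=p(n)\le 2/n$ with $n^2p=\omega(1)$. Let $H$ be an $n$-vertex connected graph with maximum degree $\Delta$, $1\le \Delta\le n^2p/57600$. Let $G=G(n,p)$ on $V(H)$ and $R:=H\cup G$. Then whp $\mathrm{tw}(R)=\Omega(\mathrm{tw}(H)+n^2p/\Delta)$.
   Context: $G(n,p)$ is the binomial random graph; asymptotics are as $n\to\infty$; whp means with probability $1-o(1)$; $\Omega$ hides an absolute positive constant. $\mathrm{tw}$ denotes treewidth. *)

theory Defs
  imports "HOL-Probability.Probability"
begin

definition ugraph :: "'a set \<Rightarrow> 'a set set \<Rightarrow> bool" where
  "ugraph V E \<longleftrightarrow> finite V \<and> (\<forall>e\<in>E. \<exists>u v. e = {u, v} \<and> u \<noteq> v \<and> u \<in> V \<and> v \<in> V)"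

definition connected_graph :: "'a set \<Rightarrow> 'a set set \<Rightarrow> bool" where
  "connected_graph V E \<longleftrightarrow> V \<noteq> {} \<and>
     (\<forall>u\<in>V. \<forall>v\<in>V. (\<lambda>x y. {x, y} \<in> E)\<^sup>*\<^sup>* u v)"

definition is_tree :: "'a set \<Rightarrow> 'a set set \<Rightarrow> bool" where
  "is_tree I F \<longleftrightarrow> ugraph I F \<and> connected_graph I F \<and> card F = card I - 1"

definition degree :: "'a set set \<Rightarrow> 'a \<Rightarrow> nat" where
  "degree E v = card {e\<in>E. v \<in> e}"

definition max_degree :: "'a set \<Rightarrow> 'a set set \<Rightarrow> nat" where
  "max_degree V E = Max (degree E ` V)"

definition tree_decomp :: "'a set \<Rightarrow> 'a set set \<Rightarrow> nat set \<Rightarrow> nat set set \<Rightarrow> (nat \<Rightarrow> 'a set) \<Rightarrow> bool" where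
  "tree_decomp V E I F B \<longleftrightarrow> is_tree I F \<and>
     (\<forall>i\<in>I. B i \<subseteq> V) \<and>
     (\<forall>v\<in>V. \<exists>i\<in>I. v \<in> B i) \<and>
     (\<forall>e\<in>E. \<exists>i\<in>I. e \<subseteq> B i) \<and>
     (\<forall>v\<in>V. connected_graph {i\<in>I. v \<in> B i} {f\<in>F. \<forall>i\<in>f. v \<in> B i})"

definition treewidth :: "'a set \<Rightarrow> 'a set set \<Rightarrow> nat" where
  "treewidth V E = (LEAST k. \<exists>I F B. tree_decomp V E I F B \<and> (\<forall>i\<in>I. card (B i) \<le> k + 1))"

definition all_pairs :: "nat \<Rightarrow> nat set set" where
  "all_pairs n = {e. \<exists>u v. e = {u, v} \<and> u \<noteq> v \<and> u < n \<and> v < n}"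

definition Gnp :: "nat \<Rightarrow> real \<Rightarrow> nat set set pmf" where
  "Gnp n p = map_pmf (\<lambda>f. {e\<in>all_pairs n. f e}) (Pi_pmf (all_pairs n) False (\<lambda>_. bernoulli_pmf p))"

end

theory Submission
  imports Defs
begin

abbreviation adj :: "'a set set \<Rightarrow> 'a \<Rightarrow> 'a \<Rightarrow> bool" where
  "adj E x y \<equiv> {x, y} \<in> E"

lemma rtranclp_sym_rel:
  assumes "\<And>a b. r a b \<Longrightarrow> r b a" "r\<^sup>*\<^sup>* x y"
  shows "r\<^sup>*\<^sup>* y x"
  using symp_rtranclp[of r] assms unfolding symp_def by blast

lemma adj_sym: "adj E x y = adj E y x"
  by (simp add: insert_commute)

definition gdist :: "'a set set \<Rightarrow> 'a \<Rightarrow> 'a \<Rightarrow> nat" where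
  "gdist E r v = (LEAST k. (adj E ^^ k) v r)"

lemma gdist_ex:
  assumes "(adj E)\<^sup>*\<^sup>* v r"
  shows "(adj E ^^ gdist E r v) v r"
proof -
  obtain k where "(adj E ^^ k) v r" using rtranclp_imp_relpowp[OF assms] by blast
  then show ?thesis unfolding gdist_def by (rule LeastI)
qed

lemma gdist_le:
  assumes "(adj E ^^ k) v r"
  shows "gdist E r v \<le> k"
  using assms unfolding gdist_def by (rule Least_le)

lemma parent_ex:
  assumes "(adj E)\<^sup>*\<^sup>* v r" "v \<noteq> r"
  shows "\<exists>u. adj E v u \<and> gdist E r u + 1 = gdist E r v \<and> (adj E)\<^sup>*\<^sup>* u r"
proof -
  let ?k = "gdist E r v"
  have k: "(adj E ^^ ?k) v r" using gdist_ex[OF assms(1)] .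
  have "?k \<noteq> 0"
  proof
    assume "?k = 0" then show False using k assms(2) by simp
  qed
  then obtain j where j: "?k = Suc j" by (cases ?k) auto
  then obtain u where u: "adj E v u" "(adj E ^^ j) u r" proof -
    have "(adj E ^^ Suc j) v r" using k j by simp
    then show ?thesis using that by (blast dest: relpowp_Suc_D2)
  qed
  have "gdist E r u \<le> j" using gdist_le[OF u(2)] .
  moreover have "(adj E ^^ Suc (gdist E r u)) v r"
    by (rule relpowp_Suc_I2[OF u(1) gdist_ex[OF relpowp_imp_rtranclp[OF u(2)]]])
  then have "?k \<le> Suc (gdist E r u)" by (rule gdist_le)
  ultimately have "gdist E r u + 1 = ?k" using j by simp
  moreover have "(adj E)\<^sup>*\<^sup>* u r" using u(2) by (rule relpowp_imp_rtranclp)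
  ultimately show ?thesis using u(1) by blast
qed

lemma edge_count:
  assumes fin: "finite E" and r: "r \<in> V"
    and conn: "\<forall>v\<in>V. (adj E)\<^sup>*\<^sup>* v r"
  shows "card V \<le> card E + 1"
proof -
  define par where "par v = (SOME u. adj E v u \<and> gdist E r u + 1 = gdist E r v \<and> (adj E)\<^sup>*\<^sup>* u r)" for v
  have par: "adj E v (par v) \<and> gdist E r (par v) + 1 = gdist E r v" if "v \<in> V - {r}" for v
  proof -
    have "\<exists>u. adj E v u \<and> gdist E r u + 1 = gdist E r v \<and> (adj E)\<^sup>*\<^sup>* u r"
      using parent_ex[of E v r] that conn by blast
    then show ?thesis unfolding par_def by (rule someI2_ex) blast
  qed
  define g where "g v = {v, par v}" for v
  have inj: "inj_on g (V - {r})"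
  proof (rule inj_onI)
    fix v w assume v: "v \<in> V - {r}" and w: "w \<in> V - {r}" and eq: "g v = g w"
    show "v = w"
    proof (rule ccontr)
      assume "v \<noteq> w"
      then have "v = par w" "w = par v" using eq unfolding g_def by (auto simp: doubleton_eq_iff)
      then show False using par[OF v] par[OF w] by simp
    qed
  qed
  have "g ` (V - {r}) \<subseteq> E" using par unfolding g_def by auto
  then have "card (g ` (V - {r})) \<le> card E" by (rule card_mono[OF fin])
  then have "card (V - {r}) \<le> card E" using card_image[OF inj] by simp
  moreover have "card V \<le> card (V - {r}) + 1"
    using r by (cases "finite V") (auto simp: card_Diff_singleton)
  ultimately show ?thesis by linarith
qed

lemma rtranclp_lift:
  assumes "\<And>a b. r a b \<Longrightarrow> s\<^sup>*\<^sup>* a b" "r\<^sup>*\<^sup>* u v"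
  shows "s\<^sup>*\<^sup>* u v"
  using assms(2) by induction (auto intro: rtranclp_trans assms(1))

lemma ugraph_finite_E: "ugraph V E \<Longrightarrow> finite E"
proof -
  assume u: "ugraph V E"
  then have "E \<subseteq> Pow V" unfolding ugraph_def by auto
  moreover have "finite V" using u unfolding ugraph_def by auto
  ultimately show "finite E" by (meson finite_Pow_iff rev_finite_subset)
qed

lemma ugraph_adj: "ugraph V E \<Longrightarrow> adj E a b \<Longrightarrow> a \<in> V \<and> b \<in> V \<and> a \<noteq> b"
  unfolding ugraph_def by (force simp: doubleton_eq_iff)

definition avoid :: "'a set set \<Rightarrow> 'a \<Rightarrow> 'a \<Rightarrow> 'a \<Rightarrow> bool" where
  "avoid F x a b \<longleftrightarrow> adj F a b \<and> a \<noteq> x \<and> b \<noteq> x"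

definition branch :: "'a set set \<Rightarrow> 'a \<Rightarrow> 'a \<Rightarrow> 'a set" where
  "branch F x y = {z. (avoid F x)\<^sup>*\<^sup>* z y}"

lemma avoid_sym: "avoid F x a b \<Longrightarrow> avoid F x b a"
  unfolding avoid_def by (simp add: insert_commute)

lemma avoid_rt_sym: "(avoid F x)\<^sup>*\<^sup>* a b \<Longrightarrow> (avoid F x)\<^sup>*\<^sup>* b a"
  by (rule rtranclp_sym_rel[OF avoid_sym])

lemma avoid_to_del:
  assumes "z \<in> e" "(avoid F z)\<^sup>*\<^sup>* a b"
  shows "(adj (F - {e}))\<^sup>*\<^sup>* a b"
proof (rule rtranclp_lift[OF _ assms(2)])
  fix a b assume "avoid F z a b"
  then have "adj (F - {e}) a b" using assms(1) unfolding avoid_def by auto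
  then show "(adj (F - {e}))\<^sup>*\<^sup>* a b" by auto
qed

lemma tree_AC:
  assumes tree: "is_tree I F" and xy: "adj F x y"
  shows "\<not> (adj (F - {{x,y}}))\<^sup>*\<^sup>* x y"
proof
  assume reach: "(adj (F - {{x,y}}))\<^sup>*\<^sup>* x y"
  have ug: "ugraph I F" and con: "connected_graph I F" and cd: "card F = card I - 1"
    using tree unfolding is_tree_def by auto
  have finF: "finite F" using ug by (rule ugraph_finite_E)
  have xI: "x \<in> I" using ugraph_adj[OF ug xy] by auto
  have step: "(adj (F - {{x,y}}))\<^sup>*\<^sup>* a b" if "adj F a b" for a b
  proof (cases "{a,b} = {x,y}")
    case True
    then have "(a = x \<and> b = y) \<or> (a = y \<and> b = x)" by (auto simp: doubleton_eq_iff)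
    then show ?thesis
    proof
      assume "a = x \<and> b = y" then show ?thesis using reach by simp
    next
      assume "a = y \<and> b = x" then show ?thesis
        using rtranclp_sym_rel[of "adj (F - {{x,y}})", OF _ reach] by (simp add: insert_commute)
    qed
  next
    case False
    then show ?thesis using that by auto
  qed
  have "\<forall>v\<in>I. (adj (F - {{x,y}}))\<^sup>*\<^sup>* v x"
    using con xI step rtranclp_lift[of "adj F" "adj (F - {{x,y}})"] unfolding connected_graph_def by blast
  then have "card I \<le> card (F - {{x,y}}) + 1"
    using edge_count[of "F - {{x,y}}" x I] finF xI by blast
  moreover have "card (F - {{x,y}}) = card F - 1" using finF xy by simp
  moreover have "card F \<ge> 1" using finF xy by (metis One_nat_def Suc_leI card_gt_0_iff empty_iff)
  ultimately show False using cd by linarith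
qed

lemma branch_sub:
  assumes ug: "ugraph I F" and xy: "adj F x y"
  shows "branch F x y \<subseteq> I"
proof
  fix z assume "z \<in> branch F x y"
  then have "(avoid F x)\<^sup>*\<^sup>* z y" unfolding branch_def by auto
  then show "z \<in> I"
  proof (cases rule: converse_rtranclpE)
    case base then show ?thesis using ugraph_adj[OF ug xy] by auto
  next
    case (step c) then show ?thesis using ugraph_adj[OF ug] unfolding avoid_def by blast
  qed
qed

lemma branch_notin: "x \<notin> branch F x y \<or> x = y"
proof -
  have "x = y" if "(avoid F x)\<^sup>*\<^sup>* x y"
    using that by (cases rule: converse_rtranclpE) (auto simp: avoid_def)
  then show ?thesis unfolding branch_def by auto
qed

lemma branch_self: "y \<in> branch F x y"
  unfolding branch_def by auto

lemma tree_T1: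
  assumes "(adj F)\<^sup>*\<^sup>* z x" "z \<noteq> x"
  shows "\<exists>y. adj F x y \<and> z \<in> branch F x y"
  using assms unfolding branch_def
proof (induction rule: converse_rtranclp_induct)
  case base then show ?case by simp
next
  case (step z z')
  show ?case
  proof (cases "z' = x")
    case True
    then show ?thesis using step by (auto simp: insert_commute)
  next
    case False
    then obtain y where "adj F x y" "(avoid F x)\<^sup>*\<^sup>* z' y" using step by auto
    moreover have "avoid F x z z'" using step False unfolding avoid_def by auto
    ultimately show ?thesis by (blast intro: converse_rtranclp_into_rtranclp)
  qed
qed

lemma tree_disj:
  assumes tree: "is_tree I F" and "adj F x y" "adj F x y'" "y \<noteq> y'"
  shows "branch F x y \<inter> branch F x y' = {}"
proof (rule ccontr)
  assume "branch F x y \<inter> branch F x y' \<noteq> {}"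
  then obtain w where "(avoid F x)\<^sup>*\<^sup>* w y" "(avoid F x)\<^sup>*\<^sup>* w y'" unfolding branch_def by auto
  then have "(avoid F x)\<^sup>*\<^sup>* y' y" by (meson avoid_rt_sym rtranclp_trans)
  then have 1: "(adj (F - {{x,y}}))\<^sup>*\<^sup>* y' y" by (rule avoid_to_del[rotated]) simp
  have "adj (F - {{x,y}}) x y'" using assms by (auto simp: doubleton_eq_iff)
  then have "(adj (F - {{x,y}}))\<^sup>*\<^sup>* x y" using 1 by (meson converse_rtranclp_into_rtranclp)
  then show False using tree_AC[OF tree assms(2)] by simp
qed

lemma tree_swap:
  assumes tree: "is_tree I F" and xy: "adj F x y"
  shows "branch F x y \<inter> branch F y x = {}"
proof (rule ccontr)
  assume "branch F x y \<inter> branch F y x \<noteq> {}"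
  then obtain w where w1: "(avoid F x)\<^sup>*\<^sup>* w y" and w2: "(avoid F y)\<^sup>*\<^sup>* w x" unfolding branch_def by auto
  have 1: "(adj (F - {{x,y}}))\<^sup>*\<^sup>* w y" by (rule avoid_to_del[OF _ w1]) simp
  have "(adj (F - {{x,y}}))\<^sup>*\<^sup>* w x" by (rule avoid_to_del[OF _ w2]) simp
  then have "(adj (F - {{x,y}}))\<^sup>*\<^sup>* x w"
    by (rule rtranclp_sym_rel[rotated]) (simp add: insert_commute)
  then have "(adj (F - {{x,y}}))\<^sup>*\<^sup>* x y" using 1 by (rule rtranclp_trans)
  then show False using tree_AC[OF tree xy] by simp
qed

lemma tree_T2:
  assumes tree: "is_tree I F" and xy: "adj F x y" and yz: "adj F y z" and zx: "z \<noteq> x"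
  shows "branch F y z \<subset> branch F x y"
proof -
  have ug: "ugraph I F" using tree unfolding is_tree_def by auto
  have yx: "adj F y x" using xy by (simp add: insert_commute)
  have xn: "x \<notin> branch F y z"
    using tree_disj[OF tree yx yz] zx branch_self[of x F y] by auto
  have sub: "branch F y z \<subseteq> branch F x y"
  proof
    fix w assume "w \<in> branch F y z"
    then have wz: "(avoid F y)\<^sup>*\<^sup>* w z" unfolding branch_def by auto
    have "(avoid F x)\<^sup>*\<^sup>* w z" using wz
    proof (induction rule: converse_rtranclp_induct)
      case base then show ?case by simp
    next
      case (step a b)
      have "a \<in> branch F y z" "b \<in> branch F y z" using step unfolding branch_def
        by (auto intro: converse_rtranclp_into_rtranclp)
      then have "a \<noteq> x" "b \<noteq> x" using xn by auto
      then have "avoid F x a b" using step(1) unfolding avoid_def by auto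
      then show ?case using step(3) by (meson converse_rtranclp_into_rtranclp)
    qed
    moreover have "avoid F x z y" using yz zx ugraph_adj[OF ug xy]
      unfolding avoid_def by (auto simp: insert_commute)
    ultimately show "w \<in> branch F x y" unfolding branch_def by auto
  qed
  have "y \<notin> branch F y z" using branch_notin[of y F z] ugraph_adj[OF ug yz] by auto
  then show ?thesis using sub branch_self[of y F x] by auto
qed

definition tconn :: "'a set set \<Rightarrow> 'a set \<Rightarrow> bool" where
  "tconn F T \<longleftrightarrow> (\<forall>a\<in>T. \<forall>b\<in>T. (\<lambda>u v. adj F u v \<and> u \<in> T \<and> v \<in> T)\<^sup>*\<^sup>* a b)"

lemma tree_T3:
  assumes tree: "is_tree I F" and T: "tconn F T" "T \<noteq> {}" "T \<subseteq> I" "x \<notin> T" "x \<in> I"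
  shows "\<exists>y. adj F x y \<and> T \<subseteq> branch F x y"
proof -
  have con: "connected_graph I F" using tree unfolding is_tree_def by auto
  obtain a where a: "a \<in> T" using T by auto
  then have "a \<noteq> x" "a \<in> I" using T by auto
  then obtain y where y: "adj F x y" "a \<in> branch F x y"
    using tree_T1[of F a x] con T(5) unfolding connected_graph_def by blast
  have "b \<in> branch F x y" if "b \<in> T" for b
  proof -
    have "(\<lambda>u v. adj F u v \<and> u \<in> T \<and> v \<in> T)\<^sup>*\<^sup>* b a" using T(1) that a unfolding tconn_def by auto
    then have "(avoid F x)\<^sup>*\<^sup>* b a"
      by (rule rtranclp_lift[rotated]) (use T(4) in \<open>auto simp: avoid_def\<close>)
    then show ?thesis using y(2) unfolding branch_def by (auto intro: rtranclp_trans)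
  qed
  then show ?thesis using y by auto
qed

lemma split_sum:
  fixes a :: "'b \<Rightarrow> real"
  assumes "finite K" "\<forall>y\<in>K. 0 \<le> a y \<and> a y \<le> \<beta>" "0 \<le> \<beta>"
  shows "\<exists>S\<subseteq>K. \<bar>2 * sum a S - sum a K\<bar> \<le> \<beta>"
  using assms
proof (induction K rule: finite_induct)
  case empty then show ?case by simp
next
  case (insert y K)
  then obtain S where S: "S \<subseteq> K" "\<bar>2 * sum a S - sum a K\<bar> \<le> \<beta>" by auto
  have fS: "finite S" using S(1) insert(1) by (rule finite_subset)
  have yS: "y \<notin> S" using S(1) insert(2) by auto
  have ay: "0 \<le> a y" "a y \<le> \<beta>" using insert(4) by auto
  have sK: "sum a (insert y K) = a y + sum a K" using insert by simp
  show ?case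
  proof (cases "2 * sum a S - sum a K \<le> 0")
    case True
    have "sum a (insert y S) = a y + sum a S" using fS yS by simp
    then have "\<bar>2 * sum a (insert y S) - sum a (insert y K)\<bar> \<le> \<beta>" using sK S(2) ay True by auto
    moreover have "insert y S \<subseteq> insert y K" using S(1) by auto
    ultimately show ?thesis by blast
  next
    case False
    then have "\<bar>2 * sum a S - sum a (insert y K)\<bar> \<le> \<beta>" using sK S(2) ay by auto
    moreover have "S \<subseteq> insert y K" using S(1) by auto
    ultimately show ?thesis by blast
  qed
qed

lemma tree_split:
  fixes w :: "'j \<Rightarrow> real" and T :: "'j \<Rightarrow> 'a set"
  assumes tree: "is_tree I F" and finJ: "finite J"
    and T: "\<forall>j\<in>J. T j \<subseteq> I \<and> T j \<noteq> {} \<and> tconn F (T j)"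
    and w: "\<forall>j\<in>J. w j \<ge> 0"
  shows "\<exists>x\<in>I. \<exists>J1 J2. J1 \<union> J2 = {j\<in>J. x \<notin> T j} \<and> J1 \<inter> J2 = {} \<and>
           (\<forall>j1\<in>J1. \<forall>j2\<in>J2. T j1 \<inter> T j2 = {}) \<and> \<bar>sum w J1 - sum w J2\<bar> \<le> sum w J / 2"
proof -
  have ug: "ugraph I F" and con: "connected_graph I F" using tree unfolding is_tree_def by auto
  have finI: "finite I" using ug unfolding ugraph_def by auto
  define W where "W = sum w J"
  define om where "om x y = sum w {j\<in>J. T j \<subseteq> branch F x y}" for x y
  have om_nn: "0 \<le> om x y" for x y unfolding om_def using w by (auto intro: sum_nonneg)
  have om_swap: "om x y + om y x \<le> W" if xy: "adj F x y" for x y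
  proof -
    have d: "{j\<in>J. T j \<subseteq> branch F x y} \<inter> {j\<in>J. T j \<subseteq> branch F y x} = {}"
      using tree_swap[OF tree xy] T by blast
    have "om x y + om y x = sum w ({j\<in>J. T j \<subseteq> branch F x y} \<union> {j\<in>J. T j \<subseteq> branch F y x})"
      unfolding om_def using finJ d by (simp add: sum.union_disjoint)
    also have "\<dots> \<le> W" unfolding W_def using finJ w by (intro sum_mono2) auto
    finally show ?thesis .
  qed
  have "\<exists>x\<in>I. \<forall>y. adj F x y \<longrightarrow> om x y \<le> W / 2"
  proof (cases "\<exists>x y. adj F x y \<and> om x y > W / 2")
    case False
    have "I \<noteq> {}" using con unfolding connected_graph_def by auto
    then show ?thesis using False by (auto simp: not_less)
  next
    case True
    then obtain p0 where "adj F (fst p0) (snd p0) \<and> om (fst p0) (snd p0) > W / 2" by auto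
    then obtain p where p: "adj F (fst p) (snd p) \<and> om (fst p) (snd p) > W / 2"
      and pmin: "\<forall>q. adj F (fst q) (snd q) \<and> om (fst q) (snd q) > W / 2 \<longrightarrow>
          card (branch F (fst p) (snd p)) \<le> card (branch F (fst q) (snd q))"
      using ex_has_least_nat[of "\<lambda>q. adj F (fst q) (snd q) \<and> om (fst q) (snd q) > W / 2" p0
          "\<lambda>q. card (branch F (fst q) (snd q))"] by blast
    define x0 where "x0 = fst p"
    define y0 where "y0 = snd p"
    have xy0: "adj F x0 y0" "om x0 y0 > W / 2" using p unfolding x0_def y0_def by auto
    have "\<forall>z. adj F y0 z \<longrightarrow> om y0 z \<le> W / 2"
    proof (intro allI impI)
      fix z assume yz: "adj F y0 z"
      show "om y0 z \<le> W / 2"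
      proof (cases "z = x0")
        case True
        then show ?thesis using om_swap[OF xy0(1)] xy0(2) by simp
      next
        case False
        show ?thesis
        proof (rule ccontr)
          assume "\<not> om y0 z \<le> W / 2"
          then have "card (branch F x0 y0) \<le> card (branch F y0 z)"
            using pmin[rule_format, of "(y0, z)"] yz unfolding x0_def y0_def by auto
          moreover have "branch F y0 z \<subset> branch F x0 y0" using tree_T2[OF tree xy0(1) yz False] .
          moreover have "finite (branch F x0 y0)" using branch_sub[OF ug xy0(1)] finI
            by (rule finite_subset)
          ultimately show False by (meson leD psubset_card_mono)
        qed
      qed
    qed
    moreover have "y0 \<in> I" using ugraph_adj[OF ug xy0(1)] by auto
    ultimately show ?thesis by blast
  qed
  then obtain x where xI: "x \<in> I" and xc: "\<forall>y. adj F x y \<longrightarrow> om x y \<le> W / 2" by blast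
  define N where "N = {y. adj F x y}"
  have "N \<subseteq> I" using ugraph_adj[OF ug] unfolding N_def by blast
  then have finN: "finite N" using finI by (rule finite_subset)
  have W0: "0 \<le> W" unfolding W_def using w by (auto intro: sum_nonneg)
  obtain S where S: "S \<subseteq> N" "\<bar>2 * sum (om x) S - sum (om x) N\<bar> \<le> W / 2"
    using split_sum[OF finN, of "om x" "W/2"] xc om_nn W0 unfolding N_def by auto
  define Jx where "Jx = {j\<in>J. x \<notin> T j}"
  define B where "B y = {j\<in>J. T j \<subseteq> branch F x y}" for y
  have Bdisj: "\<forall>y\<in>N. \<forall>y'\<in>N. y \<noteq> y' \<longrightarrow> B y \<inter> B y' = {}"
    unfolding B_def N_def using tree_disj[OF tree] T by blast
  have BJx: "\<Union>(B ` N) = Jx"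
  proof
    show "\<Union>(B ` N) \<subseteq> Jx"
    proof
      fix j assume "j \<in> \<Union>(B ` N)"
      then obtain y where y: "adj F x y" "j \<in> J" "T j \<subseteq> branch F x y" unfolding B_def N_def by auto
      have "x \<noteq> y" using ugraph_adj[OF ug y(1)] by auto
      then have "x \<notin> branch F x y" using branch_notin[of x F y] by auto
      then show "j \<in> Jx" using y unfolding Jx_def by auto
    qed
    show "Jx \<subseteq> \<Union>(B ` N)"
    proof
      fix j assume "j \<in> Jx"
      then have "j \<in> J" "x \<notin> T j" unfolding Jx_def by auto
      moreover have "T j \<subseteq> I" "T j \<noteq> {}" "tconn F (T j)" using T \<open>j \<in> J\<close> by auto
      ultimately obtain y where "adj F x y" "T j \<subseteq> branch F x y"
        using tree_T3[OF tree _ _ _ _ xI] by metis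
      then show "j \<in> \<Union>(B ` N)" unfolding B_def N_def using \<open>j \<in> J\<close> by auto
    qed
  qed
  have finB: "\<forall>y\<in>N. finite (B y)" unfolding B_def using finJ by auto
  have omB: "om x y = sum w (B y)" for y unfolding om_def B_def by simp
  define J1 where "J1 = \<Union>(B ` S)"
  define J2 where "J2 = Jx - J1"
  have J1sub: "J1 \<subseteq> Jx" unfolding J1_def using BJx S(1) by auto
  have s1: "sum w J1 = sum (om x) S" unfolding J1_def omB
    by (rule sum.UNION_disjoint) (use S(1) finN finB Bdisj in \<open>auto intro: finite_subset, blast\<close>)
  have sN: "sum w Jx = sum (om x) N" unfolding omB BJx[symmetric]
    by (rule sum.UNION_disjoint) (use finN finB Bdisj in auto)
  have finJx: "finite Jx" unfolding Jx_def using finJ by auto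
  have s2: "sum w J2 = sum w Jx - sum w J1" unfolding J2_def
    using sum_diff[OF finJx J1sub] by simp
  have cross: "\<forall>j1\<in>J1. \<forall>j2\<in>J2. T j1 \<inter> T j2 = {}"
  proof (intro ballI)
    fix j1 j2 assume j1: "j1 \<in> J1" and j2: "j2 \<in> J2"
    obtain y1 where y1: "y1 \<in> S" "j1 \<in> B y1" using j1 unfolding J1_def by auto
    obtain y2 where y2: "y2 \<in> N" "j2 \<in> B y2" using j2 BJx unfolding J2_def by auto
    have "y2 \<notin> S" using y2 j2 unfolding J1_def J2_def by auto
    then have "y1 \<noteq> y2" using y1 by auto
    then have "branch F x y1 \<inter> branch F x y2 = {}"
      using tree_disj[OF tree] y1(1) y2(1) S(1) unfolding N_def by auto
    then show "T j1 \<inter> T j2 = {}" using y1(2) y2(2) unfolding B_def by auto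
  qed
  have "J1 \<union> J2 = Jx" "J1 \<inter> J2 = {}" using J1sub unfolding J2_def by auto
  moreover have "\<bar>sum w J1 - sum w J2\<bar> \<le> sum w J / 2"
    using S(2) s1 s2 sN unfolding W_def by (simp add: abs_if)
  ultimately show ?thesis using xI cross unfolding Jx_def by blast
qed

definition partP :: "'a set set \<Rightarrow> 'a set \<Rightarrow> nat \<Rightarrow> nat \<Rightarrow> 'a set set \<Rightarrow> bool" where
  "partP H U M L PP \<longleftrightarrow> (\<forall>P\<in>PP. P \<noteq> {} \<and> P \<subseteq> U \<and> tconn H P \<and> card P \<le> M) \<and>
     (\<forall>P\<in>PP. \<forall>Q\<in>PP. P \<noteq> Q \<longrightarrow> P \<inter> Q = {}) \<and> \<Union>PP = U \<and> card {P\<in>PP. card P < L} \<le> 1"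

lemma tconn_from_root:
  assumes "\<forall>w\<in>D. (\<lambda>u v. adj H u v \<and> u \<in> D \<and> v \<in> D)\<^sup>*\<^sup>* w v"
  shows "tconn H D"
  unfolding tconn_def
proof (intro ballI)
  fix a b assume "a \<in> D" "b \<in> D"
  have s: "\<And>x y. (\<lambda>u v. adj H u v \<and> u \<in> D \<and> v \<in> D) x y \<Longrightarrow> (\<lambda>u v. adj H u v \<and> u \<in> D \<and> v \<in> D) y x"
    by (auto simp: insert_commute)
  have 1: "(\<lambda>u v. adj H u v \<and> u \<in> D \<and> v \<in> D)\<^sup>*\<^sup>* a v" using assms \<open>a \<in> D\<close> by blast
  have bv: "(\<lambda>u v. adj H u v \<and> u \<in> D \<and> v \<in> D)\<^sup>*\<^sup>* b v" using assms \<open>b \<in> D\<close> by blast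
  have 2: "(\<lambda>u v. adj H u v \<and> u \<in> D \<and> v \<in> D)\<^sup>*\<^sup>* v b" by (rule rtranclp_sym_rel[where r="\<lambda>u v. adj H u v \<and> u \<in> D \<and> v \<in> D", OF _ bv]) (auto simp: insert_commute)
  show "(\<lambda>u v. adj H u v \<and> u \<in> D \<and> v \<in> D)\<^sup>*\<^sup>* a b" using 1 2 by (rule rtranclp_trans)
qed

lemma partition_rooted:
  fixes H :: "'a set set" and rk :: "'a \<Rightarrow> nat"
  assumes finV: "finite V"
    and hp: "\<forall>v\<in>V-{r}. par v \<in> V \<and> adj H v (par v) \<and> rk (par v) < rk v"
    and deg: "\<forall>v\<in>V. card {c\<in>V-{r}. par c = v} \<le> Delta"
    and L: "L \<ge> 1" and Dl: "Delta \<ge> 1"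
  shows "U \<subseteq> V \<Longrightarrow> r \<in> U \<Longrightarrow> (\<forall>v\<in>U-{r}. par v \<in> U) \<Longrightarrow> \<exists>PP. partP H U (Delta * L) L PP"
proof (induction "card U" arbitrary: U rule: less_induct)
  case less
  note UV = less.prems(1) and rU = less.prems(2) and cl = less.prems(3)
  have finU: "finite U" using UV finV by (rule finite_subset)
  define Pr where "Pr a b \<longleftrightarrow> a \<in> U \<and> a \<noteq> r \<and> b = par a" for a b
  define desc where "desc v = {w\<in>U. Pr\<^sup>*\<^sup>* w v}" for v
  have d1: "Pr\<^sup>*\<^sup>* w r" if "w \<in> U" for w
    using that
  proof (induction "rk w" arbitrary: w rule: less_induct)
    case less
    show ?case
    proof (cases "w = r")
      case True then show ?thesis by simp
    next
      case False
      then have pw: "Pr w (par w)" "par w \<in> U" "rk (par w) < rk w" using less.prems cl hp UV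
        unfolding Pr_def by auto
      have "Pr\<^sup>*\<^sup>* (par w) r" using less.hyps[OF pw(3) pw(2)] .
      then show ?thesis by (rule converse_rtranclp_into_rtranclp[of Pr, OF pw(1)])
    qed
  qed
  have d2: "rk b \<le> rk a" if "Pr\<^sup>*\<^sup>* a b" for a b
    using that
  proof (induction rule: rtranclp_induct)
    case base then show ?case by simp
  next
    case (step y z)
    then have "rk z < rk y" using hp UV unfolding Pr_def by auto
    then show ?case using step by simp
  qed
  define ch where "ch v = {c\<in>U-{r}. par c = v}" for v
  have chPr: "Pr c v" if "c \<in> ch v" for c v using that unfolding ch_def Pr_def by auto
  have d3: "v \<notin> desc c" if "c \<in> ch v" for c v
  proof
    assume "v \<in> desc c"
    then have "rk c \<le> rk v" using d2 unfolding desc_def by auto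
    moreover have "rk v < rk c" using that hp UV unfolding ch_def by auto
    ultimately show False by simp
  qed
  have d4: "desc c \<subseteq> desc v" if "c \<in> ch v" for c v
    using chPr[OF that] unfolding desc_def by (auto intro: rtranclp.rtrancl_into_rtrancl)
  have d5: "desc v \<subseteq> insert v (\<Union>c\<in>ch v. desc c)" for v
  proof
    fix w assume "w \<in> desc v"
    then have wU: "w \<in> U" and wv: "Pr\<^sup>*\<^sup>* w v" unfolding desc_def by auto
    from wv show "w \<in> insert v (\<Union>c\<in>ch v. desc c)"
    proof (cases rule: rtranclp.cases)
      case rtrancl_refl then show ?thesis by simp
    next
      case (rtrancl_into_rtrancl c)
      then have "c \<in> ch v" unfolding Pr_def ch_def by auto
      then show ?thesis using rtrancl_into_rtrancl wU unfolding desc_def by auto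
    qed
  qed
  have vdesc: "v \<in> desc v" if "v \<in> U" for v using that unfolding desc_def by auto
  have descU: "desc v \<subseteq> U" for v unfolding desc_def by auto
  have finch: "finite (ch v)" for v unfolding ch_def using finU by auto
  have chcard: "card (ch v) \<le> Delta" if "v \<in> U" for v
  proof -
    have "ch v \<subseteq> {c\<in>V-{r}. par c = v}" unfolding ch_def using UV by auto
    then have "card (ch v) \<le> card {c\<in>V-{r}. par c = v}" using finV by (intro card_mono) auto
    then show ?thesis using deg that UV by force
  qed
  have d6: "card (desc v) \<le> Delta * L"
    if vU: "v \<in> U" and small: "\<forall>c\<in>ch v. card (desc c) < L" for v
  proof -
    have "card (desc v) \<le> card (insert v (\<Union>c\<in>ch v. desc c))"
    proof (rule card_mono)
      show "finite (insert v (\<Union>c\<in>ch v. desc c))" using finch finite_subset[OF descU finU] by blast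
      show "desc v \<subseteq> insert v (\<Union>c\<in>ch v. desc c)" by (rule d5)
    qed
    also have "\<dots> \<le> Suc (card (\<Union>c\<in>ch v. desc c))" using finch finite_subset[OF descU finU] by (simp add: card_insert_if)
    also have "card (\<Union>c\<in>ch v. desc c) \<le> (\<Sum>c\<in>ch v. card (desc c))"
      by (rule card_UN_le[OF finch])
    also have "\<dots> \<le> (\<Sum>c\<in>ch v. (L - 1))" using small by (intro sum_mono) auto
    also have "\<dots> = card (ch v) * (L - 1)" by simp
    also have "\<dots> \<le> Delta * (L - 1)" using chcard[OF vU] by simp
    finally have "card (desc v) \<le> Suc (Delta * (L - 1))" by simp
    moreover have "Suc (Delta * (L - 1)) \<le> Delta * L" using L Dl
      by (cases L) (auto simp: algebra_simps)
    ultimately show ?thesis by linarith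
  qed
  have d7: "tconn H (desc v)" if "v \<in> U" for v
  proof (rule tconn_from_root[of _ _ v], intro ballI)
    fix w assume "w \<in> desc v"
    then have "Pr\<^sup>*\<^sup>* w v" unfolding desc_def by auto
    then show "(\<lambda>a b. adj H a b \<and> a \<in> desc v \<and> b \<in> desc v)\<^sup>*\<^sup>* w v"
    proof (induction rule: converse_rtranclp_induct)
      case base then show ?case by simp
    next
      case (step a b)
      have "a \<in> desc v" "b \<in> desc v" using step that cl unfolding desc_def Pr_def
        by (auto intro: converse_rtranclp_into_rtranclp)
      moreover have "adj H a b" using step(1) hp UV unfolding Pr_def by auto
      ultimately show ?case using step(3) by (auto intro: converse_rtranclp_into_rtranclp)
    qed
  qed
  have d9: "desc r = U" using d1 unfolding desc_def by auto
  have Uone: "partP H U (Delta * L) L {U}" if "card U \<le> Delta * L"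
  proof -
    have "card {P\<in>{U}. card P < L} \<le> 1"
      by (rule order_trans[OF card_mono[of "{U}"]]) auto
    then show ?thesis unfolding partP_def using that d7[OF rU] d9 rU by auto
  qed
  show ?case
  proof (cases "card U < L")
    case True
    moreover have "L \<le> Delta * L" using Dl by simp
    ultimately have "card U \<le> Delta * L" by linarith
    then show ?thesis using Uone by blast
  next
    case False
    have rBig: "L \<le> card (desc r)" using False d9 by simp
    obtain v where v: "v \<in> U \<and> L \<le> card (desc v)"
      and vmin: "\<forall>u. u \<in> U \<and> L \<le> card (desc u) \<longrightarrow> card (desc v) \<le> card (desc u)"
      using ex_has_least_nat[of "\<lambda>u. u \<in> U \<and> L \<le> card (desc u)" r "\<lambda>u. card (desc u)"] rBig rU
      by blast
    have small: "\<forall>c\<in>ch v. card (desc c) < L"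
    proof
      fix c assume c: "c \<in> ch v"
      have "desc c \<subset> desc v" using d3[OF c] d4[OF c] vdesc v by blast
      then have "card (desc c) < card (desc v)"
        by (rule psubset_card_mono[OF finite_subset[OF descU finU]])
      moreover have "c \<in> U" using c unfolding ch_def by auto
      ultimately show "card (desc c) < L" using vmin by force
    qed
    have vsz: "card (desc v) \<le> Delta * L" using d6 v small by blast
    show ?thesis
    proof (cases "v = r")
      case True
      then show ?thesis using Uone vsz d9 by auto
    next
      case False
      define U' where "U' = U - desc v"
      have rU': "r \<in> U'"
      proof -
        have "r \<notin> desc v"
        proof
          assume "r \<in> desc v"
          then have "Pr\<^sup>*\<^sup>* r v" unfolding desc_def by auto
          then show False using False by (cases rule: converse_rtranclpE) (auto simp: Pr_def)
        qed
        then show ?thesis using rU unfolding U'_def by auto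
      qed
      have cl': "\<forall>w\<in>U'-{r}. par w \<in> U'"
      proof
        fix w assume w: "w \<in> U' - {r}"
        then have "par w \<in> U" using cl unfolding U'_def by auto
        moreover have "par w \<notin> desc v"
        proof
          assume "par w \<in> desc v"
          then have "Pr\<^sup>*\<^sup>* w v" using w unfolding desc_def U'_def Pr_def
            by (auto intro: converse_rtranclp_into_rtranclp)
          then show False using w unfolding desc_def U'_def by auto
        qed
        ultimately show "par w \<in> U'" unfolding U'_def by auto
      qed
      have "U' \<subset> U" using vdesc v descU unfolding U'_def by blast
      then have "card U' < card U" by (rule psubset_card_mono[OF finU])
      moreover have "U' \<subseteq> V" using UV unfolding U'_def by auto
      ultimately obtain PP where PP: "partP H U' (Delta * L) L PP" using less.hyps rU' cl' by blast
      have dne: "desc v \<noteq> {}" using vdesc v by auto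
      have "partP H U (Delta * L) L (insert (desc v) PP)"
        unfolding partP_def
      proof (intro conjI)
        show "\<forall>P\<in>insert (desc v) PP. P \<noteq> {} \<and> P \<subseteq> U \<and> tconn H P \<and> card P \<le> Delta * L"
          using PP dne descU d7 v vsz unfolding partP_def U'_def by auto
        show "\<forall>P\<in>insert (desc v) PP. \<forall>Q\<in>insert (desc v) PP. P \<noteq> Q \<longrightarrow> P \<inter> Q = {}"
          using PP unfolding partP_def U'_def by blast
        show "\<Union>(insert (desc v) PP) = U" using PP descU unfolding partP_def U'_def by auto
        have "{P\<in>insert (desc v) PP. card P < L} = {P\<in>PP. card P < L}" using v by auto
        then show "card {P\<in>insert (desc v) PP. card P < L} \<le> 1" using PP unfolding partP_def by simp
      qed
      then show ?thesis by blast
    qed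
  qed
qed

lemma partition_graph:
  assumes ug: "ugraph V H" and con: "connected_graph V H"
    and deg: "\<forall>v\<in>V. degree H v \<le> Delta" and L: "L \<ge> 1" and Dl: "Delta \<ge> 1"
  shows "\<exists>PP. partP H V (Delta * L) L PP"
proof -
  obtain r where rV: "r \<in> V" using con unfolding connected_graph_def by auto
  have finV: "finite V" using ug unfolding ugraph_def by auto
  have finH: "finite H" using ug by (rule ugraph_finite_E)
  define par where "par v = (SOME u. adj H v u \<and> gdist H r u + 1 = gdist H r v \<and> (adj H)\<^sup>*\<^sup>* u r)" for v
  have par: "adj H v (par v) \<and> gdist H r (par v) + 1 = gdist H r v" if "v \<in> V - {r}" for v
  proof -
    have "(adj H)\<^sup>*\<^sup>* v r" using con that rV unfolding connected_graph_def by auto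
    then have "\<exists>u. adj H v u \<and> gdist H r u + 1 = gdist H r v \<and> (adj H)\<^sup>*\<^sup>* u r"
      using parent_ex[of H v r] that by blast
    then show ?thesis unfolding par_def by (rule someI2_ex) blast
  qed
  have hp: "\<forall>v\<in>V-{r}. par v \<in> V \<and> adj H v (par v) \<and> gdist H r (par v) < gdist H r v"
    using par ugraph_adj[OF ug] by fastforce
  have dg: "\<forall>v\<in>V. card {c\<in>V-{r}. par c = v} \<le> Delta"
  proof
    fix v assume vV: "v \<in> V"
    have inj: "inj_on (\<lambda>c. {c, v}) {c\<in>V-{r}. par c = v}"
      by (rule inj_onI) (auto simp: doubleton_eq_iff)
    have "(\<lambda>c. {c, v}) ` {c\<in>V-{r}. par c = v} \<subseteq> {e\<in>H. v \<in> e}" using hp by auto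
    then have "card ((\<lambda>c. {c, v}) ` {c\<in>V-{r}. par c = v}) \<le> card {e\<in>H. v \<in> e}"
      using finH by (intro card_mono) auto
    then have "card {c\<in>V-{r}. par c = v} \<le> degree H v"
      unfolding degree_def using card_image[OF inj] by simp
    then show "card {c\<in>V-{r}. par c = v} \<le> Delta" using deg vV by force
  qed
  show ?thesis using partition_rooted[OF finV hp dg L Dl, of V] rV hp by auto
qed

definition TP :: "nat set \<Rightarrow> (nat \<Rightarrow> 'a set) \<Rightarrow> 'a set \<Rightarrow> nat set" where
  "TP I B P = {i\<in>I. \<exists>a\<in>P. a \<in> B i}"

lemma TP_tconn:
  assumes td: "tree_decomp V R I F B" and HR: "Hh \<subseteq> R" and P: "P \<subseteq> V" "tconn Hh P"
  shows "tconn F (TP I B P)"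
proof -
  define T where "T = TP I B P"
  define RT where "RT u v \<longleftrightarrow> adj F u v \<and> u \<in> T \<and> v \<in> T" for u v
  have sub: "\<forall>v\<in>V. connected_graph {i\<in>I. v \<in> B i} {f\<in>F. \<forall>i\<in>f. v \<in> B i}"
    and edges: "\<forall>e\<in>R. \<exists>i\<in>I. e \<subseteq> B i"
    using td unfolding tree_decomp_def by auto
  have inner: "RT\<^sup>*\<^sup>* i i'" if "a \<in> P" "i \<in> I" "a \<in> B i" "i' \<in> I" "a \<in> B i'" for a i i'
  proof -
    have "(\<lambda>x y. {x, y} \<in> {f\<in>F. \<forall>i\<in>f. a \<in> B i})\<^sup>*\<^sup>* i i'"
      using sub that P(1) unfolding connected_graph_def by blast
    then show ?thesis
    proof (rule rtranclp_lift[rotated])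
      fix x y assume "{x, y} \<in> {f\<in>F. \<forall>i\<in>f. a \<in> B i}"
      moreover have "x \<in> I" "y \<in> I" using calculation td ugraph_adj[of I F x y]
        unfolding tree_decomp_def is_tree_def by auto
      ultimately have "RT x y" unfolding RT_def T_def TP_def using that(1) by auto
      then show "RT\<^sup>*\<^sup>* x y" by auto
    qed
  qed
  have path: "\<forall>i\<in>I. \<forall>i'\<in>I. a \<in> B i \<longrightarrow> b \<in> B i' \<longrightarrow> RT\<^sup>*\<^sup>* i i'"
    if ab: "(\<lambda>u v. adj Hh u v \<and> u \<in> P \<and> v \<in> P)\<^sup>*\<^sup>* a b" and aP: "a \<in> P" for a b
    using ab
  proof (induction rule: rtranclp_induct)
    case base then show ?case using inner aP by blast
  next
    case (step b c)
    show ?case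
    proof (intro ballI impI)
      fix i i' assume ii: "i \<in> I" "i' \<in> I" "a \<in> B i" "c \<in> B i'"
      obtain i0 where i0: "i0 \<in> I" "{b, c} \<subseteq> B i0" using edges step(2) HR by blast
      have "RT\<^sup>*\<^sup>* i i0" using step(3) ii i0 by auto
      moreover have "RT\<^sup>*\<^sup>* i0 i'" using inner[of c i0 i'] step(2) ii i0 by auto
      ultimately show "RT\<^sup>*\<^sup>* i i'" by (rule rtranclp_trans)
    qed
  qed
  show ?thesis unfolding tconn_def
  proof (intro ballI)
    fix i i' assume "i \<in> TP I B P" "i' \<in> TP I B P"
    then obtain a b where "a \<in> P" "b \<in> P" "i \<in> I" "i' \<in> I" "a \<in> B i" "b \<in> B i'"
      unfolding TP_def by auto
    moreover have "(\<lambda>u v. adj Hh u v \<and> u \<in> P \<and> v \<in> P)\<^sup>*\<^sup>* a b"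
      using P(2) calculation unfolding tconn_def by auto
    ultimately have "RT\<^sup>*\<^sup>* i i'" using path by blast
    then show "(\<lambda>u v. adj F u v \<and> u \<in> TP I B P \<and> v \<in> TP I B P)\<^sup>*\<^sup>* i i'"
      unfolding RT_def T_def .
  qed
qed

lemma card_Union_sub:
  assumes PP: "partP Hh V M L PP" and finV: "finite V" and J: "J \<subseteq> PP"
  shows "real (card (\<Union>J)) = (\<Sum>P\<in>J. real (card P))"
proof -
  have "pairwise disjnt J" using PP J unfolding partP_def pairwise_def disjnt_def by blast
  moreover have "\<And>A. A \<in> J \<Longrightarrow> finite A"
  proof -
    fix A assume "A \<in> J"
    then have "A \<subseteq> V" using PP J unfolding partP_def by blast
    then show "finite A" using finV by (rule finite_subset)
  qed
  ultimately have "card (\<Union>J) = sum card J" by (rule card_Union_disjoint)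
  then show ?thesis by simp
qed

lemma separation:
  assumes td: "tree_decomp V R I F B" and bags: "\<forall>i\<in>I. card (B i) \<le> k + 1"
    and PP: "partP Hh V M L PP" and HR: "Hh \<subseteq> R" and finV: "finite V"
  shows "\<exists>J1 J2. J1 \<subseteq> PP \<and> J2 \<subseteq> PP \<and> J1 \<inter> J2 = {} \<and> (\<forall>a\<in>\<Union>J1. \<forall>b\<in>\<Union>J2. \<not> adj R a b) \<and>
     real (card V) \<le> 2 * real (card (\<Union>J1)) + real (card V) / 2 + real ((k+1) * M) \<and>
     real (card V) \<le> 2 * real (card (\<Union>J2)) + real (card V) / 2 + real ((k+1) * M)"
proof -
  have tree: "is_tree I F" and bagsV: "\<forall>i\<in>I. B i \<subseteq> V" and cover: "\<forall>v\<in>V. \<exists>i\<in>I. v \<in> B i"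
    and edges: "\<forall>e\<in>R. \<exists>i\<in>I. e \<subseteq> B i"
    using td unfolding tree_decomp_def by auto
  have PPp: "\<forall>P\<in>PP. P \<noteq> {} \<and> P \<subseteq> V \<and> tconn Hh P \<and> card P \<le> M"
    and PPd: "\<forall>P\<in>PP. \<forall>Q\<in>PP. P \<noteq> Q \<longrightarrow> P \<inter> Q = {}" and PPu: "\<Union>PP = V"
    using PP unfolding partP_def by auto
  have finPP: "finite PP" using finV PPu by (simp add: finite_UnionD)
  define w where "w P = real (card P)" for P :: "'a set"
  have Tc: "\<forall>P\<in>PP. TP I B P \<subseteq> I \<and> TP I B P \<noteq> {} \<and> tconn F (TP I B P)"
  proof
    fix P assume P: "P \<in> PP"
    then obtain a where "a \<in> P" "a \<in> V" using PPp by blast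
    then obtain i where "i \<in> I" "a \<in> B i" using cover by blast
    then have "TP I B P \<noteq> {}" unfolding TP_def using \<open>a \<in> P\<close> by blast
    moreover have "tconn F (TP I B P)" using TP_tconn[OF td HR] PPp P by blast
    ultimately show "TP I B P \<subseteq> I \<and> TP I B P \<noteq> {} \<and> tconn F (TP I B P)" unfolding TP_def by auto
  qed
  obtain x J1 J2 where xI: "x \<in> I" and J12: "J1 \<union> J2 = {P\<in>PP. x \<notin> TP I B P}" "J1 \<inter> J2 = {}"
    and cr: "\<forall>j1\<in>J1. \<forall>j2\<in>J2. TP I B j1 \<inter> TP I B j2 = {}"
    and bal: "\<bar>sum w J1 - sum w J2\<bar> \<le> sum w PP / 2"
    using tree_split[OF tree finPP Tc, of w] unfolding w_def by auto
  define Kx where "Kx = {P\<in>PP. x \<in> TP I B P}"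
  have sPP: "sum w PP = real (card V)"
    using card_Union_sub[OF PP finV order_refl] PPu unfolding w_def by simp
  have "J1 \<subseteq> PP" "J2 \<subseteq> PP" "Kx \<subseteq> PP" using J12 unfolding Kx_def by auto
  then have fJ1: "finite J1" "finite J2" "finite Kx" using finPP by (auto intro: finite_subset)
  have "sum w PP = sum w (J1 \<union> J2) + sum w Kx"
  proof -
    have "PP = (J1 \<union> J2) \<union> Kx" using J12 unfolding Kx_def by auto
    moreover have "(J1 \<union> J2) \<inter> Kx = {}" using J12 unfolding Kx_def by auto
    moreover have "finite (J1 \<union> J2)" using fJ1 by simp
    ultimately show ?thesis using sum.union_disjoint[of "J1 \<union> J2" Kx w] fJ1(3) by simp
  qed
  moreover have "sum w (J1 \<union> J2) = sum w J1 + sum w J2" by (rule sum.union_disjoint[OF fJ1(1) fJ1(2) J12(2)])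
  ultimately have sum3: "real (card V) = sum w J1 + sum w J2 + sum w Kx" using sPP by simp
  have cK: "card Kx \<le> k + 1"
  proof -
    define f where "f P = (SOME a. a \<in> P \<and> a \<in> B x)" for P
    have fP: "f P \<in> P \<and> f P \<in> B x" if "P \<in> Kx" for P
    proof -
      have "\<exists>a. a \<in> P \<and> a \<in> B x" using that unfolding Kx_def TP_def by auto
      then show ?thesis unfolding f_def by (rule someI_ex)
    qed
    have inj: "inj_on f Kx"
    proof (rule inj_onI)
      fix P Q assume PQ: "P \<in> Kx" "Q \<in> Kx" "f P = f Q"
      have "f P \<in> P" using fP[OF PQ(1)] by simp
      moreover have "f P \<in> Q" using fP[OF PQ(2)] PQ(3) by simp
      ultimately have "f P \<in> P \<inter> Q" by simp
      moreover have "P \<in> PP" "Q \<in> PP" using \<open>P \<in> Kx\<close> \<open>Q \<in> Kx\<close> unfolding Kx_def by auto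
      ultimately show "P = Q" using PPd by blast
    qed
    moreover have "f ` Kx \<subseteq> B x" using fP by auto
    moreover have "finite (B x)" using bagsV xI finV by (auto intro: finite_subset)
    ultimately have "card (f ` Kx) \<le> card (B x)" by (intro card_mono)
    then have "card Kx \<le> card (B x)" using card_image[OF inj] by simp
    moreover have "card (B x) \<le> k + 1" using bags xI by blast
    ultimately show ?thesis by linarith
  qed
  have "\<And>P. P \<in> Kx \<Longrightarrow> w P \<le> real M" using PPp unfolding Kx_def w_def by auto
  then have "sum w Kx \<le> of_nat (card Kx) * real M" by (rule sum_bounded_above)
  also have "\<dots> \<le> real ((k+1) * M)"
  proof -
    have "card Kx * M \<le> (k+1) * M" using cK by (rule mult_right_mono) simp
    then show ?thesis by (metis of_nat_le_iff of_nat_mult)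
  qed
  finally have sK: "sum w Kx \<le> real ((k+1) * M)" .
  have J1P: "J1 \<subseteq> PP" and J2P: "J2 \<subseteq> PP" using J12 by auto
  have c1: "real (card (\<Union>J1)) = sum w J1" "real (card (\<Union>J2)) = sum w J2"
    unfolding w_def by (rule card_Union_sub[OF PP finV J1P], rule card_Union_sub[OF PP finV J2P])
  have cross: "\<forall>a\<in>\<Union>J1. \<forall>b\<in>\<Union>J2. \<not> adj R a b"
  proof (intro ballI notI)
    fix a b assume a: "a \<in> \<Union>J1" and b: "b \<in> \<Union>J2" and ab: "adj R a b"
    obtain P Q where PQ: "P \<in> J1" "Q \<in> J2" "a \<in> P" "b \<in> Q" using a b by auto
    obtain i where "i \<in> I" "{a, b} \<subseteq> B i" using edges ab by blast
    then have "i \<in> TP I B P \<inter> TP I B Q" using PQ unfolding TP_def by auto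
    then show False using cr PQ by blast
  qed
  have "J1 \<subseteq> PP" "J2 \<subseteq> PP" using J12 by auto
  moreover have "real (card V) \<le> 2 * real (card (\<Union>J1)) + real (card V) / 2 + real ((k+1) * M)"
    "real (card V) \<le> 2 * real (card (\<Union>J2)) + real (card V) / 2 + real ((k+1) * M)"
  proof -
    have "sum w J1 - sum w J2 \<le> sum w PP / 2" "sum w J2 - sum w J1 \<le> sum w PP / 2"
      using bal abs_le_iff[of "sum w J1 - sum w J2" "sum w PP / 2"] by linarith+
    then show "real (card V) \<le> 2 * real (card (\<Union>J1)) + real (card V) / 2 + real ((k+1) * M)"
      "real (card V) \<le> 2 * real (card (\<Union>J2)) + real (card V) / 2 + real ((k+1) * M)"
      using c1 sum3 sK sPP by linarith+
  qed
  ultimately show ?thesis using J12(2) cross by blast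
qed

lemma td_trivial:
  assumes "finite V" "V \<noteq> {}" "\<forall>e\<in>E. e \<subseteq> V"
  shows "tree_decomp V E {0::nat} {} (\<lambda>_. V)"
  using assms unfolding tree_decomp_def is_tree_def ugraph_def connected_graph_def by auto

lemma tw_attained:
  assumes "finite V" "V \<noteq> {}" "\<forall>e\<in>E. e \<subseteq> V"
  shows "\<exists>I F B. tree_decomp V E I F B \<and> (\<forall>i\<in>I. card (B i) \<le> treewidth V E + 1)"
proof -
  have "\<exists>I F B. tree_decomp V E I F B \<and> (\<forall>i\<in>I. card (B i) \<le> card V + 1)"
    using td_trivial[OF assms] by fastforce
  then show ?thesis unfolding treewidth_def by (rule LeastI)
qed

lemma tw_mono:
  assumes "finite V" "V \<noteq> {}" "\<forall>e\<in>E. e \<subseteq> V" "E' \<subseteq> E"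
  shows "treewidth V E' \<le> treewidth V E"
proof -
  obtain I F B where td: "tree_decomp V E I F B" and b: "\<forall>i\<in>I. card (B i) \<le> treewidth V E + 1"
    using tw_attained[OF assms(1-3)] by blast
  have "tree_decomp V E' I F B" using td assms(4) unfolding tree_decomp_def by blast
  then have "\<exists>I F B. tree_decomp V E' I F B \<and> (\<forall>i\<in>I. card (B i) \<le> treewidth V E + 1)"
    using b by blast
  then show ?thesis unfolding treewidth_def[of V E'] by (rule Least_le)
qed

lemma finite_all_pairs: "finite (all_pairs n)"
proof -
  have "all_pairs n \<subseteq> Pow {0..<n}" unfolding all_pairs_def by auto
  then show ?thesis by (rule finite_subset) simp
qed

lemma prob_avoid:
  assumes D: "D \<subseteq> all_pairs n" and p: "0 \<le> p" "p \<le> 1"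
  shows "measure_pmf.prob (Gnp n p) {G. G \<inter> D = {}} = (1 - p) ^ card D"
proof -
  define Bs where "Bs e = (if e \<in> D then {False} else UNIV)" for e :: "nat set"
  have pre: "(\<lambda>f. {e\<in>all_pairs n. f e}) -` {G. G \<inter> D = {}} = Pi (all_pairs n) Bs"
    using D unfolding Bs_def Pi_def by auto
  have "measure_pmf.prob (Gnp n p) {G. G \<inter> D = {}} =
      measure_pmf.prob (Pi_pmf (all_pairs n) False (\<lambda>_. bernoulli_pmf p)) (Pi (all_pairs n) Bs)"
    unfolding Gnp_def measure_map_pmf pre ..
  also have "\<dots> = (\<Prod>e\<in>all_pairs n. measure_pmf.prob (bernoulli_pmf p) (Bs e))"
    by (rule measure_Pi_pmf_Pi[OF finite_all_pairs])
  also have "\<dots> = (\<Prod>e\<in>all_pairs n. if e \<in> D then 1 - p else 1)"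
    using p unfolding Bs_def by (intro prod.cong) (auto simp: measure_pmf_single)
  also have "\<dots> = (\<Prod>e\<in>all_pairs n \<inter> {e. e \<in> D}. 1 - p) * (\<Prod>e\<in>all_pairs n \<inter> - {e. e \<in> D}. 1)"
    by (rule prod.If_cases[OF finite_all_pairs])
  also have "all_pairs n \<inter> {e. e \<in> D} = D" using D by auto
  finally show ?thesis by simp
qed

lemma prob_avoid_le:
  assumes D: "D \<subseteq> all_pairs n" and p: "0 \<le> p" "p \<le> 1"
  shows "measure_pmf.prob (Gnp n p) {G. G \<inter> D = {}} \<le> exp (- p * real (card D))"
proof -
  have "(1 - p) ^ card D \<le> exp (- p) ^ card D"
    using p by (intro power_mono) (auto simp: exp_ge_add_one_self[of "-p", simplified])
  also have "\<dots> = exp (- p * real (card D))" by (simp add: exp_of_nat_mult[symmetric] mult.commute)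
  finally show ?thesis using prob_avoid[OF assms] by simp
qed

lemma card_PP_bound:
  assumes PP: "partP H V M L PP" and finV: "finite V" and L: "L \<ge> 1"
  shows "real (card PP) \<le> real (card V) / real L + 1"
proof -
  have PPu: "\<Union>PP = V" and sm: "card {P\<in>PP. card P < L} \<le> 1" using PP unfolding partP_def by auto
  have finPP: "finite PP" using finV PPu by (simp add: finite_UnionD)
  define Bg where "Bg = {P\<in>PP. \<not> card P < L}"
  have "PP = {P\<in>PP. card P < L} \<union> Bg" "{P\<in>PP. card P < L} \<inter> Bg = {}" unfolding Bg_def by auto
  then have "card PP = card {P\<in>PP. card P < L} + card Bg"
    using finPP card_Un_disjoint[of "{P\<in>PP. card P < L}" Bg] by (metis finite_Un)
  then have c1: "real (card PP) \<le> 1 + real (card Bg)" using sm by simp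
  have "real L * real (card Bg) = (\<Sum>P\<in>Bg. real L)" by simp
  also have "\<dots> \<le> (\<Sum>P\<in>Bg. real (card P))" unfolding Bg_def by (intro sum_mono) auto
  also have "\<dots> \<le> (\<Sum>P\<in>PP. real (card P))" using finPP unfolding Bg_def by (intro sum_mono2) auto
  also have "\<dots> = real (card V)" using card_Union_sub[OF PP finV order_refl] PPu by simp
  finally have "real L * real (card Bg) \<le> real (card V)" .
  then have "real (card Bg) \<le> real (card V) / real L" using L by (simp add: field_simps)
  then show ?thesis using c1 by simp
qed

lemma cross_card:
  assumes "A \<inter> B = {}" "finite A" "finite B"
  shows "card ((\<lambda>(a, b). {a, b}) ` (A \<times> B)) = card A * card B"
proof -
  have "inj_on (\<lambda>(a, b). {a, b}) (A \<times> B)"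
    using assms(1) by (auto simp: inj_on_def doubleton_eq_iff)
  then show ?thesis by (simp add: card_image card_cartesian_product)
qed

lemma count_bound:
  fixes m :: real
  assumes "real N \<le> m / 100 + 1" "0 \<le> m"
  shows "4 ^ N * exp (- m / 25) \<le> 4 * exp (- m / 100)"
proof -
  have l4: "0 \<le> ln (4::real)" "ln (4::real) \<le> 3" using ln_le_minus_one[of 4] by auto
  have "(4::real) ^ N = exp (real N * ln 4)" by (simp add: exp_of_nat_mult)
  then have "4 ^ N * exp (- m / 25) = exp (real N * ln 4 + (- m / 25))"
    by (simp only: exp_add)
  also have "\<dots> \<le> exp (ln 4 + (- m / 100))"
  proof -
    have "real N * ln 4 \<le> (m / 100 + 1) * ln 4" using assms(1) l4 by (intro mult_right_mono) auto
    also have "\<dots> \<le> ln 4 + 3 * m / 100"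
    proof -
      have "m * ln 4 \<le> m * 3" using l4 assms(2) by (intro mult_left_mono) auto
      then show ?thesis by (simp add: algebra_simps)
    qed
    finally show ?thesis by simp
  qed
  also have "\<dots> = exp (ln 4) * exp (- m / 100)" by (simp only: exp_add)
  also have "\<dots> = 4 * exp (- m / 100)" by simp
  finally show ?thesis .
qed

lemma lin_aux:
  fixes a t q :: real
  assumes "a < 1/8000*(t+q)" "t \<le> a" "57600 \<le> q"
  shows "a + 1 \<le> q/2000"
proof -
  have "8000 * a < t + q" using assms(1) by simp
  then show ?thesis using assms(2,3) by linarith
qed

lemma key:
  fixes H :: "nat set set" and n Delta :: nat and p :: real
  assumes p: "0 < p" "p \<le> 2 / real n" and ug: "ugraph {0..<n} H" and con: "connected_graph {0..<n} H"
    and Dd: "Delta = max_degree {0..<n} H" and D1: "1 \<le> Delta"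
    and Dm: "real Delta \<le> real n ^ 2 * p / 57600"
  shows "measure_pmf.prob (Gnp n p) {G. real (treewidth {0..<n} (H \<union> G)) \<ge>
            1/8000 * (real (treewidth {0..<n} H) + real n ^ 2 * p / real Delta)}
         \<ge> 1 - 4 * exp (- (real n ^ 2 * p) / 100)"
proof -
  define V where "V = {0..<n}"
  define m where "m = real n ^ 2 * p"
  have finV: "finite V" unfolding V_def by simp
  have Vne: "V \<noteq> {}" using con unfolding connected_graph_def V_def by auto
  then have n1: "n \<ge> 1" unfolding V_def by auto
  have cV: "card V = n" unfolding V_def by simp
  have m0: "0 < m" unfolding m_def using p n1 by simp
  have m2n: "m \<le> 2 * real n"
  proof -
    have "m = real n * (real n * p)" unfolding m_def by (simp add: power2_eq_square)
    also have "real n * p \<le> 2" using p n1 by (simp add: field_simps)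
    then have "real n * (real n * p) \<le> real n * 2" by (intro mult_left_mono) auto
    finally show ?thesis by simp
  qed
  have Dpos: "real Delta > 0" using D1 by simp
  have qbig: "m / real Delta \<ge> 57600" using Dm Dpos unfolding m_def by (simp add: field_simps)
  have n2: "real n \<ge> 28800" using qbig m2n Dpos D1
  proof -
    have "57600 * real Delta \<le> m" using qbig Dpos by (simp add: field_simps)
    then show ?thesis using m2n D1 by linarith
  qed
  have p1: "p \<le> 1" using p n2 by (smt (verit, ccfv_SIG) divide_le_eq_1_pos)
  have deg: "\<forall>v\<in>V. degree H v \<le> Delta"
    unfolding Dd max_degree_def V_def using finV unfolding V_def by (auto intro: Max_ge)
  define L where "L = nat \<lceil>100 * real n / m\<rceil>"
  have Lge: "real L \<ge> 100 * real n / m" unfolding L_def by linarith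
  have Lle: "real L \<le> 100 * real n / m + 1" unfolding L_def
    using m0 by (simp add: of_nat_nat)
  have L1: "L \<ge> 1" using Lge m0 n1
  proof -
    have "100 * real n / m > 0" using m0 n1 by simp
    then show ?thesis using Lge by linarith
  qed
  obtain PP where PP: "partP H V (Delta * L) L PP"
    using partition_graph[OF ug[folded V_def] con[folded V_def] deg L1 D1] by blast
  have PPu: "\<Union>PP = V" and PPd: "\<forall>P\<in>PP. \<forall>Q\<in>PP. P \<noteq> Q \<longrightarrow> P \<inter> Q = {}"
    and PPs: "\<forall>P\<in>PP. P \<subseteq> V"
    using PP unfolding partP_def by auto
  have finPP: "finite PP" using finV PPu by (simp add: finite_UnionD)
  have cPP: "real (card PP) \<le> m / 100 + 1"
  proof -
    have "real (card PP) \<le> real n / real L + 1" using card_PP_bound[OF PP finV L1] cV by simp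
    moreover have "real n / real L \<le> m / 100"
    proof -
      have "real n \<le> m / 100 * real L" using Lge m0 by (simp add: field_simps)
      then show ?thesis using L1 by (simp add: field_simps)
    qed
    ultimately show ?thesis by linarith
  qed
  define cr where "cr J1 J2 = (\<lambda>(a, b). {a, b}) ` (\<Union>J1 \<times> \<Union>J2)" for J1 J2 :: "nat set set"
  define Ch where "Ch = {(J1, J2). J1 \<subseteq> PP \<and> J2 \<subseteq> PP \<and> J1 \<inter> J2 = {} \<and>
      real n / 5 \<le> real (card (\<Union>J1)) \<and> real n / 5 \<le> real (card (\<Union>J2))}"
  define Ev where "Ev c = {G. G \<inter> cr (fst c) (snd c) = {}}" for c
  define Bad where "Bad = \<Union>(Ev ` Ch)"
  have finCh: "finite Ch" "card Ch \<le> 4 ^ card PP"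
  proof -
    have sub: "Ch \<subseteq> Pow PP \<times> Pow PP" unfolding Ch_def by auto
    then show "finite Ch" using finPP by (auto intro: finite_subset)
    have "card Ch \<le> card (Pow PP \<times> Pow PP)" using sub finPP by (intro card_mono) auto
    also have "\<dots> = 4 ^ card PP" using finPP by (simp add: card_cartesian_product card_Pow power_mult_distrib[symmetric])
    finally show "card Ch \<le> 4 ^ card PP" .
  qed
  have evb: "measure_pmf.prob (Gnp n p) (Ev c) \<le> exp (- m / 25)" if c: "c \<in> Ch" for c
  proof -
    obtain J1 J2 where c': "c = (J1, J2)" by (cases c)
    have J: "J1 \<subseteq> PP" "J2 \<subseteq> PP" "J1 \<inter> J2 = {}" "real n / 5 \<le> real (card (\<Union>J1))"
      "real n / 5 \<le> real (card (\<Union>J2))" using c unfolding Ch_def c' by auto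
    have disj: "\<Union>J1 \<inter> \<Union>J2 = {}"
    proof (rule ccontr)
      assume "\<Union>J1 \<inter> \<Union>J2 \<noteq> {}"
      then obtain x P Q where "P \<in> J1" "Q \<in> J2" "x \<in> P" "x \<in> Q" by blast
      moreover have "P \<noteq> Q" using calculation J(3) by blast
      moreover have "P \<in> PP" "Q \<in> PP" using calculation J(1,2) by blast+
      ultimately show False using PPd by blast
    qed
    have sub12: "\<Union>J1 \<subseteq> V" "\<Union>J2 \<subseteq> V" using J(1,2) PPu by auto
    have fin12: "finite (\<Union>J1)" "finite (\<Union>J2)" using sub12 finV by (auto intro: finite_subset)
    have crsub: "cr J1 J2 \<subseteq> all_pairs n"
    proof
      fix e assume "e \<in> cr J1 J2"
      then obtain a b where ab: "e = {a, b}" "a \<in> \<Union>J1" "b \<in> \<Union>J2" unfolding cr_def by auto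
      then have "a \<noteq> b" "a < n" "b < n" using disj sub12 unfolding V_def by auto
      then show "e \<in> all_pairs n" unfolding all_pairs_def using ab(1) by blast
    qed
    have ccr: "real (card (cr J1 J2)) = real (card (\<Union>J1)) * real (card (\<Union>J2))"
      unfolding cr_def using cross_card[OF disj fin12] by simp
    have "(real n / 5) * (real n / 5) \<le> real (card (\<Union>J1)) * real (card (\<Union>J2))"
      using J(4,5) n1 by (intro mult_mono) auto
    then have "p * ((real n / 5) * (real n / 5)) \<le> p * (real (card (\<Union>J1)) * real (card (\<Union>J2)))"
      using p by (intro mult_left_mono) auto
    moreover have "m / 25 = p * ((real n / 5) * (real n / 5))" unfolding m_def by (simp add: power2_eq_square)
    ultimately have "m / 25 \<le> p * real (card (cr J1 J2))" using ccr by simp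
    then have "exp (- p * real (card (cr J1 J2))) \<le> exp (- m / 25)" by simp
    moreover have "measure_pmf.prob (Gnp n p) (Ev c) \<le> exp (- p * real (card (cr J1 J2)))"
      unfolding Ev_def c' using prob_avoid_le[OF crsub] p p1 by simp
    ultimately show ?thesis by linarith
  qed
  have pBad: "measure_pmf.prob (Gnp n p) Bad \<le> 4 * exp (- m / 100)"
  proof -
    have "measure_pmf.prob (Gnp n p) Bad \<le> (\<Sum>c\<in>Ch. measure_pmf.prob (Gnp n p) (Ev c))"
      unfolding Bad_def by (rule measure_pmf.finite_measure_subadditive_finite[OF finCh(1)]) auto
    also have "\<dots> \<le> real (card Ch) * exp (- m / 25)"
      using evb sum_bounded_above[of Ch "\<lambda>c. measure_pmf.prob (Gnp n p) (Ev c)" "exp (- m / 25)"] by simp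
    also have "\<dots> \<le> 4 ^ card PP * exp (- m / 25)"
    proof -
      have "real (card Ch) \<le> real (4 ^ card PP)" using finCh(2) by (simp only: of_nat_le_iff)
      then have "real (card Ch) \<le> 4 ^ card PP" by simp
      then show ?thesis by (intro mult_right_mono) auto
    qed
    also have "\<dots> \<le> 4 * exp (- m / 100)" by (rule count_bound[OF cPP]) (use m0 in simp)
    finally show ?thesis .
  qed
  define Good where "Good = {G. real (treewidth {0..<n} (H \<union> G)) \<ge>
            1/8000 * (real (treewidth {0..<n} H) + real n ^ 2 * p / real Delta)}"
  have det: "G \<in> Bad \<or> G \<in> Good" if GS: "G \<in> set_pmf (Gnp n p)" for G
  proof (rule disjCI)
    assume nG: "G \<notin> Good"
    have "G \<in> (\<lambda>f. {e\<in>all_pairs n. f e}) ` set_pmf (Pi_pmf (all_pairs n) False (\<lambda>_. bernoulli_pmf p))"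
      using GS unfolding Gnp_def set_map_pmf .
    then obtain f where "G = {e\<in>all_pairs n. f e}" by (rule imageE)
    then have Gsub: "G \<subseteq> all_pairs n" by blast
    have edgesV: "\<forall>e\<in>H \<union> G. e \<subseteq> V"
    proof
      fix e assume "e \<in> H \<union> G"
      then show "e \<subseteq> V"
      proof
        assume "e \<in> H"
        then obtain u v where "e = {u, v}" "u \<in> {0..<n}" "v \<in> {0..<n}" using ug unfolding ugraph_def by blast
        then show ?thesis unfolding V_def by simp
      next
        assume "e \<in> G" then have "e \<in> all_pairs n" using Gsub by blast
        then show ?thesis unfolding all_pairs_def V_def by auto
      qed
    qed
    define k where "k = treewidth V (H \<union> G)"
    have twm: "treewidth V H \<le> k" unfolding k_def by (rule tw_mono[OF finV Vne edgesV]) simp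
    have "real k < 1/8000 * (real (treewidth V H) + m / real Delta)"
      using nG unfolding Good_def k_def V_def m_def by simp
    moreover have "real (treewidth V H) \<le> real k" using twm by simp
    ultimately have kb: "real k + 1 \<le> m / real Delta / 2000" using qbig lin_aux by blast
    obtain I F B where td: "tree_decomp V (H \<union> G) I F B" and bags: "\<forall>i\<in>I. card (B i) \<le> k + 1"
      using tw_attained[OF finV Vne edgesV] unfolding k_def by blast
    obtain J1 J2 where J: "J1 \<subseteq> PP" "J2 \<subseteq> PP" "J1 \<inter> J2 = {}"
      and nadj: "\<forall>a\<in>\<Union>J1. \<forall>b\<in>\<Union>J2. \<not> adj (H \<union> G) a b"
      and s1: "real (card V) \<le> 2 * real (card (\<Union>J1)) + real (card V) / 2 + real ((k+1) * (Delta * L))"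
      and s2: "real (card V) \<le> 2 * real (card (\<Union>J2)) + real (card V) / 2 + real ((k+1) * (Delta * L))"
      using separation[OF td bags PP _ finV] by blast
    have KM: "real ((k+1) * (Delta * L)) \<le> real n / 10"
    proof -
      have a: "(real k + 1) * real Delta \<le> m / 2000" using kb Dpos by (simp add: field_simps)
      have "real ((k+1) * (Delta * L)) = ((real k + 1) * real Delta) * real L" by (simp add: algebra_simps)
      also have "\<dots> \<le> (m / 2000) * real L" using a by (intro mult_right_mono) auto
      also have "\<dots> \<le> (m / 2000) * (100 * real n / m + 1)" using Lle m0 by (intro mult_left_mono) auto
      also have "\<dots> = real n / 20 + m / 2000" using m0 by (simp add: field_simps)
      also have "\<dots> \<le> real n / 10" using m2n by simp
      finally show ?thesis .
    qed
    have "(J1, J2) \<in> Ch" unfolding Ch_def using J s1 s2 KM cV by auto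
    moreover have "G \<in> Ev (J1, J2)"
    proof -
      have "G \<inter> cr J1 J2 = {}"
      proof (rule ccontr)
        assume "G \<inter> cr J1 J2 \<noteq> {}"
        then obtain a b where "a \<in> \<Union>J1" "b \<in> \<Union>J2" "{a, b} \<in> G" unfolding cr_def by auto
        then show False using nadj by blast
      qed
      then show ?thesis unfolding Ev_def by simp
    qed
    ultimately show "G \<in> Bad" unfolding Bad_def by blast
  qed
  have "set_pmf (Gnp n p) - Bad \<subseteq> Good" using det by blast
  then have "measure_pmf.prob (Gnp n p) (set_pmf (Gnp n p) - Bad) \<le> measure_pmf.prob (Gnp n p) Good"
    by (intro measure_pmf.finite_measure_mono) auto
  moreover have "measure_pmf.prob (Gnp n p) (set_pmf (Gnp n p)) \<le>
      measure_pmf.prob (Gnp n p) (set_pmf (Gnp n p) - Bad) + measure_pmf.prob (Gnp n p) Bad"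
  proof -
    have "measure_pmf.prob (Gnp n p) (set_pmf (Gnp n p)) \<le> measure_pmf.prob (Gnp n p) ((set_pmf (Gnp n p) - Bad) \<union> Bad)"
      by (intro measure_pmf.finite_measure_mono) auto
    also have "\<dots> \<le> measure_pmf.prob (Gnp n p) (set_pmf (Gnp n p) - Bad) + measure_pmf.prob (Gnp n p) Bad"
      by (rule measure_subadditive) (auto simp: measure_pmf.emeasure_eq_measure)
    finally show ?thesis .
  qed
  moreover have "measure_pmf.prob (Gnp n p) (set_pmf (Gnp n p)) = 1"
    using measure_Int_set_pmf[of "Gnp n p" UNIV] by (simp add: measure_pmf.prob_space)
  ultimately show ?thesis using pBad unfolding Good_def m_def by simp
qed

lemma exp_lim:
  fixes m :: "nat \<Rightarrow> real"
  assumes "filterlim m at_top sequentially"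
  shows "((\<lambda>n. 1 - 4 * exp (- m n / 100)) \<longlongrightarrow> 1) sequentially"
proof -
  have "filterlim (\<lambda>n. m n / 100) at_top sequentially"
    using filterlim_tendsto_pos_mult_at_top[OF tendsto_const[of "1/100::real"] _ assms] by simp
  then have "filterlim (\<lambda>n. - m n / 100) at_bot sequentially"
    by (simp add: filterlim_uminus_at_bot)
  then have "((\<lambda>n. exp (- m n / 100)) \<longlongrightarrow> 0) sequentially"
    by (rule filterlim_compose[OF exp_at_bot])
  then have "((\<lambda>n. 1 - 4 * exp (- m n / 100)) \<longlongrightarrow> 1 - 4 * 0) sequentially"
    by (intro tendsto_intros)
  then show ?thesis by simp
qed

theorem mainTheorem5:
  "\<exists>c>0. \<forall>(p :: nat \<Rightarrow> real) (H :: nat \<Rightarrow> nat set set).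
     (\<forall>\<^sub>F n in sequentially.
        0 < p n \<and> p n \<le> 2 / real n \<and>
        ugraph {0..<n} (H n) \<and> connected_graph {0..<n} (H n) \<and>
        1 \<le> max_degree {0..<n} (H n) \<and>
        real (max_degree {0..<n} (H n)) \<le> real n ^ 2 * p n / 57600) \<longrightarrow>
     filterlim (\<lambda>n. real n ^ 2 * p n) at_top sequentially \<longrightarrow>
     ((\<lambda>n. measure_pmf.prob (Gnp n (p n))
        {G. real (treewidth {0..<n} (H n \<union> G)) \<ge>
            c * (real (treewidth {0..<n} (H n)) + real n ^ 2 * p n / real (max_degree {0..<n} (H n)))})
      \<longlonglongrightarrow> 1)"
proof (intro exI[of _ "1/8000"] conjI allI impI)
  show "(0::real) < 1/8000" by simp
  fix p :: "nat \<Rightarrow> real" and H :: "nat \<Rightarrow> nat set set"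
  assume ev: "\<forall>\<^sub>F n in sequentially.
        0 < p n \<and> p n \<le> 2 / real n \<and>
        ugraph {0..<n} (H n) \<and> connected_graph {0..<n} (H n) \<and>
        1 \<le> max_degree {0..<n} (H n) \<and>
        real (max_degree {0..<n} (H n)) \<le> real n ^ 2 * p n / 57600"
    and lim: "filterlim (\<lambda>n. real n ^ 2 * p n) at_top sequentially"
  define f where "f n = measure_pmf.prob (Gnp n (p n))
        {G. real (treewidth {0..<n} (H n \<union> G)) \<ge>
            1/8000 * (real (treewidth {0..<n} (H n)) + real n ^ 2 * p n / real (max_degree {0..<n} (H n)))}" for n
  have lower: "\<forall>\<^sub>F n in sequentially. 1 - 4 * exp (- (real n ^ 2 * p n) / 100) \<le> f n"
    using ev
  proof (rule eventually_mono)
    fix n assume "0 < p n \<and> p n \<le> 2 / real n \<and>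
        ugraph {0..<n} (H n) \<and> connected_graph {0..<n} (H n) \<and>
        1 \<le> max_degree {0..<n} (H n) \<and>
        real (max_degree {0..<n} (H n)) \<le> real n ^ 2 * p n / 57600"
    then show "1 - 4 * exp (- (real n ^ 2 * p n) / 100) \<le> f n"
      unfolding f_def using key[of "p n" n "H n" "max_degree {0..<n} (H n)"] by blast
  qed
  have upper: "\<forall>\<^sub>F n in sequentially. f n \<le> 1"
    unfolding f_def by (simp add: measure_pmf.prob_le_1)
  show "f \<longlonglongrightarrow> 1"
    by (rule tendsto_sandwich[OF lower upper exp_lim[OF lim] tendsto_const])
qed

end
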